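(* Let $\mathcal O$ be a polycube with orthogonally convex layers, and let $1\le i\le m$. Every nonempty beam lying on the surface of the layer $\mathcal O_i$ (i.e., every nonempty top $i$-beam lying on top of $\mathcal O_i$ and every nonempty bottom $(i-1)$-beam lying on the bottom of $\mathcal O_i$) has at least one of its two anchors on the $i$-band.
   Context: A polycube $\mathcal O$ is an orthogonal polyhedron homeomorphic to a sphere formed as a union of unit cubes glued along entire faces; its surface is subdivided into unit squares called cells. Let $z_0<\dots<z_m$ be the distinct $z$-coordinates of vertices of $\mathcal O$; the $i$-plane is $z=z_i$. The layer $\mathcal O_i$ is the part of $\mathcal O$ between the $(i-1)$-plane and the $i$-plane. $\mathcal O$ has orthogonally convex layers if each $\mathcal O_i$ meets every line parallel to a coordinate axis in a single segment or not at all. The $i$-band is the set of vertical surface cells between the $(i-1)$-plane and the $i$-plane (the lateral boundary of $\mathcal O_i$). A face is a maximal edge-connected set of coplanar cells; an $i$-face is a face in the $i$-plane; it lies either on top of $\mathcal O_i$ (a top face) or on the bottom of $\mathcal O_{i+1}$ (a bottom face). Two surface pieces are adjacent if their boundaries share a cell edge. Cells are parallel if they lie in parallel planes. Beams: if a band cell $a$ (on the $i$-band or the $(i+1)$-band) has its horizontal edge $e$ lying in the $i$-plane adjacent to an $i$-face, then $i$-beam$(a)$ is the portion of that $i$-face illuminated by rays emitted from $e$ in the horizontal direction orthogonal to $a$; otherwise $i$-beam$(a)$ is empty. A nonempty $i$-beam$(a)$ has two anchors: $a$ and the band cell $b$ parallel to $a$ and adjacent to the beam at its other end ($b$ lies on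 the $i$-band or on the $(i+1)$-band); $i$-beam$(a)$ and $i$-beam$(b)$ coincide. *)

theory Defs
  imports "HOL-Analysis.Analysis"
begin

text \<open>A unit cube is named by its minimal corner (x,y,z) in Z^3; it occupies
  [x,x+1] x [y,y+1] x [z,z+1] in R^3.\<close>

type_synonym cube = "int \<times> int \<times> int"

definition cube_pts :: "cube \<Rightarrow> (real \<times> real \<times> real) set" where
  "cube_pts c = (case c of (x,y,z) \<Rightarrow>
     {(a,b,w). of_int x \<le> a \<and> a \<le> of_int x + 1 \<and> of_int y \<le> b \<and> b \<le> of_int y + 1
             \<and> of_int z \<le> w \<and> w \<le> of_int z + 1})"

definition solid :: "cube set \<Rightarrow> (real \<times> real \<times> real) set" where
  "solid K = (\<Union>c\<in>K. cube_pts c)"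

definition face_glued :: "cube set \<Rightarrow> cube \<Rightarrow> cube \<Rightarrow> bool" where
  "face_glued C p q = (p \<in> C \<and> q \<in> C \<and>
     (case p of (x,y,z) \<Rightarrow> case q of (x',y',z') \<Rightarrow> \<bar>x-x'\<bar> + \<bar>y-y'\<bar> + \<bar>z-z'\<bar> = 1))"

definition polycube :: "cube set \<Rightarrow> bool" where
  "polycube C = (finite C \<and> C \<noteq> {} \<and> (\<forall>p\<in>C. \<forall>q\<in>C. (face_glued C)\<^sup>*\<^sup>* p q)
     \<and> frontier (solid C) homeomorphic sphere (0::real \<times> real \<times> real) 1)"

definition sect :: "cube set \<Rightarrow> int \<Rightarrow> (int \<times> int) set" where
  "sect C z = {(x,y). (x,y,z) \<in> C}"

text \<open>Heights of the planes z = k containing vertices of the polycube: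
  exactly those where the cross-section changes.\<close>
definition planes :: "cube set \<Rightarrow> int set" where
  "planes C = {k. sect C (k - 1) \<noteq> sect C k}"

definition zpl :: "cube set \<Rightarrow> nat \<Rightarrow> int" where
  "zpl C i = sorted_list_of_set (planes C) ! i"

definition mtop :: "cube set \<Rightarrow> nat" where
  "mtop C = card (planes C) - 1"

definition layer :: "cube set \<Rightarrow> nat \<Rightarrow> cube set" where
  "layer C i = {(x,y,z). (x,y,z) \<in> C \<and> zpl C (i - 1) \<le> z \<and> z < zpl C i}"

definition axis_lines :: "(real \<times> real \<times> real) set set" where
  "axis_lines = {{(t,b,w) | t. True} | b w. True} \<union> {{(a,t,w) | t. True} | a w. True}
              \<union> {{(a,b,t) | t. True} | a b. True}"

definition orth_convex_layers :: "cube set \<Rightarrow> bool" where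
  "orth_convex_layers C = (\<forall>i. 1 \<le> i \<and> i \<le> mtop C \<longrightarrow>
      (\<forall>L\<in>axis_lines. convex (L \<inter> solid (layer C i))))"

definition hsurf :: "cube set \<Rightarrow> int \<Rightarrow> int \<times> int \<Rightarrow> bool" where
  "hsurf C k p = (case p of (x,y) \<Rightarrow> ((x,y,k-1) \<in> C) \<noteq> ((x,y,k) \<in> C))"

definition hadj :: "cube set \<Rightarrow> int \<Rightarrow> int \<times> int \<Rightarrow> int \<times> int \<Rightarrow> bool" where
  "hadj C k p q = (hsurf C k p \<and> hsurf C k q \<and> \<bar>fst p - fst q\<bar> + \<bar>snd p - snd q\<bar> = 1)"

definition hface_at :: "cube set \<Rightarrow> int \<Rightarrow> int \<times> int \<Rightarrow> (int \<times> int) set" where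
  "hface_at C k p = {q. hsurf C k p \<and> (hadj C k)\<^sup>*\<^sup>* p q}"

text \<open>Axis-relative coordinates: ax = True means the beam runs along x
  (u = x, v = y), ax = False means it runs along y (u = y, v = x).\<close>
definition hpos :: "bool \<Rightarrow> int \<Rightarrow> int \<Rightarrow> int \<times> int" where
  "hpos ax u v = (if ax then (u,v) else (v,u))"

definition cube_at :: "cube set \<Rightarrow> bool \<Rightarrow> int \<Rightarrow> int \<Rightarrow> int \<Rightarrow> bool" where
  "cube_at C ax u v z = (case hpos ax u v of (x,y) \<Rightarrow> (x,y,z) \<in> C)"

text \<open>Vertical (band) surface cell (ax,u,v,z): the unit square in the plane
  u = const separating cubes u-1 and u, spanning [v,v+1] and heights [z,z+1].\<close>
definition vsurf :: "cube set \<Rightarrow> bool \<Rightarrow> int \<Rightarrow> int \<Rightarrow> int \<Rightarrow> bool" where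
  "vsurf C ax u v z = (cube_at C ax (u - 1) v z \<noteq> cube_at C ax u v z)"

text \<open>The j-th horizontal cell met by rays emitted from the edge u of the cell,
  in direction +u (d = True) or -u (d = False).\<close>
definition beam_cell :: "bool \<Rightarrow> int \<Rightarrow> int \<Rightarrow> bool \<Rightarrow> nat \<Rightarrow> int \<times> int" where
  "beam_cell ax u v d j = hpos ax (if d then u + int j else u - 1 - int j) v"

text \<open>Beam of the band cell a = (ax,u,v,z) in the plane z = k, in direction d:
  nonempty only if a is a surface cell with a horizontal edge in the plane z = k
  (z = k-1: top edge; z = k: bottom edge) adjacent to a face in that plane;
  it consists of the cells of that face illuminated by the rays.\<close>
definition ibeam :: "cube set \<Rightarrow> bool \<Rightarrow> int \<Rightarrow> int \<Rightarrow> int \<Rightarrow> bool \<Rightarrow> int \<Rightarrow> (int \<times> int) set" where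
  "ibeam C ax u v z d k =
     (if vsurf C ax u v z \<and> (z = k - 1 \<or> z = k)
      then {beam_cell ax u v d j | j. \<forall>j'\<le>j. beam_cell ax u v d j' \<in> hface_at C k (beam_cell ax u v d 0)}
      else {})"

text \<open>Anchors of the beam, given as (u', z') (same axis ax and same v):
  the cell a itself and the parallel band cell adjacent to the beam at its other end.\<close>
definition other_anchor :: "cube set \<Rightarrow> bool \<Rightarrow> int \<Rightarrow> int \<Rightarrow> int \<Rightarrow> bool \<Rightarrow> int \<Rightarrow> int \<times> int \<Rightarrow> bool" where
  "other_anchor C ax u v z d k b = (\<exists>n>0.
      (\<forall>j<n. beam_cell ax u v d j \<in> ibeam C ax u v z d k)
      \<and> beam_cell ax u v d n \<notin> ibeam C ax u v z d k
      \<and> fst b = (if d then u + int n else u - int n)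
      \<and> (snd b = k - 1 \<or> snd b = k)
      \<and> vsurf C ax (fst b) v (snd b))"

definition anchors :: "cube set \<Rightarrow> bool \<Rightarrow> int \<Rightarrow> int \<Rightarrow> int \<Rightarrow> bool \<Rightarrow> int \<Rightarrow> (int \<times> int) set" where
  "anchors C ax u v z d k = insert (u, z) {b. other_anchor C ax u v z d k b}"

definition on_band :: "cube set \<Rightarrow> nat \<Rightarrow> int \<Rightarrow> bool" where
  "on_band C i z = (zpl C (i - 1) \<le> z \<and> z < zpl C i)"

definition top_cell :: "cube set \<Rightarrow> int \<Rightarrow> int \<times> int \<Rightarrow> bool" where
  "top_cell C k p = (case p of (x,y) \<Rightarrow> (x,y,k-1) \<in> C \<and> (x,y,k) \<notin> C)"

definition bottom_cell :: "cube set \<Rightarrow> int \<Rightarrow> int \<times> int \<Rightarrow> bool" where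
  "bottom_cell C k p = (case p of (x,y) \<Rightarrow> (x,y,k) \<in> C \<and> (x,y,k-1) \<notin> C)"

end

theory Submission imports Defs begin

lemma finite_planes: assumes "finite C" shows "finite (planes C)"
proof -
  have "planes C \<subseteq> (\<lambda>(x,y,z). z) ` C \<union> (\<lambda>(x,y,z). z+1) ` C"
  proof
    fix k assume "k \<in> planes C"
    then have "sect C (k-1) \<noteq> sect C k" by (simp add: planes_def)
    then obtain x y where "(x,y,k-1) \<in> C \<or> (x,y,k) \<in> C" unfolding sect_def by blast
    then show "k \<in> (\<lambda>(x,y,z). z) ` C \<union> (\<lambda>(x,y,z). z+1) ` C"
      by (auto intro: rev_image_eqI)
  qed
  then show ?thesis using assms finite_subset by blast
qed

lemma zpl_less:
  assumes "finite C" "i < j" "j \<le> mtop C"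
  shows "zpl C i < zpl C j"
proof -
  let ?s = "sorted_list_of_set (planes C)"
  have "length ?s = card (planes C)" using finite_planes[OF assms(1)] by simp
  then have "j < length ?s" using assms(2,3) unfolding mtop_def by linarith
  then show ?thesis unfolding zpl_def
    using sorted_wrt_nth_less[OF strict_sorted_list_of_set assms(2)] by blast
qed

lemma zpl_ge_planes:
  assumes "finite C" "p \<in> planes C"
  shows "p \<le> zpl C (mtop C)" "zpl C 0 \<le> p"
proof -
  let ?s = "sorted_list_of_set (planes C)"
  have fin: "finite (planes C)" using finite_planes[OF assms(1)] .
  have len: "length ?s = card (planes C)" using fin by simp
  have "p \<in> set ?s" using fin assms(2) by simp
  then obtain j where j: "j < length ?s" "?s ! j = p" by (metis in_set_conv_nth)
  have so: "sorted ?s" by simp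
  show "p \<le> zpl C (mtop C)" unfolding zpl_def mtop_def
    using sorted_nth_mono[OF so, of j "card (planes C) - 1"] j len by auto
  show "zpl C 0 \<le> p" unfolding zpl_def
    using sorted_nth_mono[OF so, of 0 j] j len by auto
qed

lemma cube_top:
  assumes "finite C" "(x,y,h) \<in> C" "zpl C i \<le> h" "i \<le> mtop C"
  shows "i < mtop C"
proof (rule ccontr)
  assume "\<not> i < mtop C"
  then have ii: "i = mtop C" using assms(4) by simp
  let ?Z = "(\<lambda>(x,y,z). z) ` C"
  have fz: "finite ?Z" "?Z \<noteq> {}" using assms(1,2) by auto
  define H where "H = Max ?Z"
  have "H \<in> ?Z" using fz H_def by simp
  then obtain a b where ab: "(a,b,H) \<in> C" by auto
  have hH: "h \<le> H" unfolding H_def using fz assms(2) by (auto intro!: Max_ge rev_image_eqI)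
  have "\<forall>a b. (a,b,H+1) \<notin> C"
  proof (intro allI notI)
    fix a b assume "(a,b,H+1) \<in> C"
    then have "H+1 \<in> ?Z" by (auto intro: rev_image_eqI)
    then have "H + 1 \<le> H" unfolding H_def using fz by (meson Max_ge)
    then show False by simp
  qed
  then have "sect C (H+1-1) \<noteq> sect C (H+1)" using ab unfolding sect_def by auto
  then have "H+1 \<in> planes C" unfolding planes_def by simp
  then have "H+1 \<le> zpl C i" using zpl_ge_planes(1)[OF assms(1)] ii by auto
  then show False using hH assms(3) by simp
qed

lemma cube_bot:
  assumes "finite C" "(x,y,h) \<in> C" "h < zpl C i" "i \<le> mtop C"
  shows "0 < i"
proof (rule ccontr)
  assume "\<not> 0 < i"
  then have ii: "i = 0" by simp
  let ?Z = "(\<lambda>(x,y,z). z) ` C"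
  have fz: "finite ?Z" "?Z \<noteq> {}" using assms(1,2) by auto
  define H where "H = Min ?Z"
  have "H \<in> ?Z" using fz H_def by simp
  then obtain a b where ab: "(a,b,H) \<in> C" by auto
  have hH: "H \<le> h" unfolding H_def using fz assms(2) by (auto intro!: Min_le rev_image_eqI)
  have "\<forall>a b. (a,b,H-1) \<notin> C"
  proof (intro allI notI)
    fix a b assume "(a,b,H-1) \<in> C"
    then have "H-1 \<in> ?Z" by (auto intro: rev_image_eqI)
    then have "H \<le> H - 1" unfolding H_def using fz by (meson Min_le)
    then show False by simp
  qed
  then have "sect C (H-1) \<noteq> sect C H" using ab unfolding sect_def by auto
  then have "H \<in> planes C" unfolding planes_def by simp
  then have "zpl C i \<le> H" using zpl_ge_planes(2)[OF assms(1)] ii by auto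
  then show False using hH assms(3) by simp
qed


lemma int_half: fixes x r :: int
  assumes "of_int x \<le> (of_int r + 1/2 :: real)" "of_int r + 1/2 \<le> (of_int x + 1 :: real)"
  shows "x = r"
proof -
  have "real_of_int x < real_of_int (r+1)" using assms(1) by simp
  then have "x < r + 1" by (simp only: of_int_less_iff)
  moreover have "real_of_int r < real_of_int (x+1)" using assms(2) by simp
  then have "r < x + 1" by (simp only: of_int_less_iff)
  ultimately show ?thesis by simp
qed

definition lpt :: "bool \<Rightarrow> int \<Rightarrow> int \<Rightarrow> real \<Rightarrow> real \<times> real \<times> real" where
  "lpt ax v h t = (if ax then (t, of_int v + 1/2, of_int h + 1/2) else (of_int v + 1/2, t, of_int h + 1/2))"

lemma lpt_line: "range (lpt ax v h) \<in> axis_lines"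
proof (cases ax)
  case True
  have "range (lpt ax v h) = {(t, of_int v + 1/2, of_int h + 1/2) | t. True}"
    using True by (auto simp: lpt_def)
  then show ?thesis unfolding axis_lines_def by blast
next
  case False
  have "range (lpt ax v h) = {(of_int v + 1/2, t, of_int h + 1/2) | t. True}"
    using False by (auto simp: lpt_def)
  then show ?thesis unfolding axis_lines_def by blast
qed

lemma lpt_in_cube: "lpt ax v h (of_int r + 1/2) \<in> cube_pts c \<longleftrightarrow> c = (case hpos ax r v of (x,y) \<Rightarrow> (x,y,h))"
proof -
  obtain x y z where c: "c = (x,y,z)" by (cases c) auto
  have A: "of_int a \<le> (of_int b + 1/2 :: real) \<and> of_int b + 1/2 \<le> (of_int a + 1 :: real) \<longleftrightarrow> a = b" for a b :: int
    using int_half[of a b] by auto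
  show ?thesis
  proof (cases ax)
    case True
    then show ?thesis unfolding c cube_pts_def lpt_def hpos_def
      using A[of x r] A[of y v] A[of z h] by auto
  next
    case False
    then show ?thesis unfolding c cube_pts_def lpt_def hpos_def
      using A[of x v] A[of y r] A[of z h] by auto
  qed
qed

lemma conv_line:
  assumes oc: "orth_convex_layers C" and l: "1 \<le> l" "l \<le> mtop C"
    and hl: "zpl C (l-1) \<le> h" "h < zpl C l"
    and cp: "cube_at C ax p v h" and cq: "cube_at C ax q v h" and pr: "p < r" and rq: "r < q"
  shows "cube_at C ax r v h"
proof -
  let ?S = "range (lpt ax v h) \<inter> solid (layer C l)"
  have cv: "convex ?S" using oc l lpt_line unfolding orth_convex_layers_def by blast
  have mem: "lpt ax v h (of_int s + 1/2) \<in> solid (layer C l) \<longleftrightarrow> cube_at C ax s v h" for s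
  proof -
    obtain a b where ab: "hpos ax s v = (a,b)" by (cases "hpos ax s v") auto
    have "lpt ax v h (of_int s + 1/2) \<in> solid (layer C l) \<longleftrightarrow> (\<exists>c\<in>layer C l. c = (a,b,h))"
      unfolding solid_def using lpt_in_cube[of ax v h s] ab by auto
    also have "\<dots> \<longleftrightarrow> (a,b,h) \<in> C" using hl unfolding layer_def by auto
    finally show ?thesis unfolding cube_at_def ab by simp
  qed
  have P: "lpt ax v h (of_int p + 1/2) \<in> ?S" using mem cp by blast
  have Q: "lpt ax v h (of_int q + 1/2) \<in> ?S" using mem cq by blast
  define th where "th = (of_int r - of_int p) / (of_int q - of_int p :: real)"
  have th0: "0 \<le> th" "th \<le> 1" using pr rq unfolding th_def by (auto simp: field_simps)
  have eq: "(1 - th) *\<^sub>R lpt ax v h (of_int p + 1/2) + th *\<^sub>R lpt ax v h (of_int q + 1/2)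
      = lpt ax v h (of_int r + 1/2)"
  proof -
    have qp: "(of_int q - of_int p :: real) \<noteq> 0" using pr rq by simp
    have X: "(1 - th) * (of_int p + 1/2) + th * (of_int q + 1/2) = (of_int r + 1/2 :: real)"
    proof -
      have "th * (of_int q - of_int p) = of_int r - of_int p" unfolding th_def using qp by simp
      moreover have "(1 - th) * (of_int p + 1/2) + th * (of_int q + 1/2) = of_int p + 1/2 + th * (of_int q - of_int p)"
        by (simp add: field_simps)
      ultimately show ?thesis by linarith
    qed
    have Y: "(1 - th) * a + th * a = a" for a :: real by (simp add: algebra_simps)
    show ?thesis
      unfolding lpt_def by (cases ax) (simp_all only: if_True if_False scaleR_Pair add_Pair real_scaleR_def X Y)
  qed
  have "(1 - th) *\<^sub>R lpt ax v h (of_int p + 1/2) + th *\<^sub>R lpt ax v h (of_int q + 1/2) \<in> ?S"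
    by (rule convexD[OF cv P Q]) (use th0 in auto)
  then have "lpt ax v h (of_int r + 1/2) \<in> ?S" unfolding eq .
  then show ?thesis using mem by blast
qed


lemma hadj_path_hsurf: "(hadj C k)\<^sup>*\<^sup>* p q \<Longrightarrow> hsurf C k p \<Longrightarrow> hsurf C k q"
  by (induction rule: rtranclp_induct) (auto simp: hadj_def)

lemma hpos_inj: "hpos ax a v = hpos ax b v \<Longrightarrow> a = b"
  by (auto simp: hpos_def split: if_splits)

lemma beam_core:
  assumes fin: "finite C"
    and hh: "(h = k \<and> h' = k-1) \<or> (h = k-1 \<and> h' = k)"
    and va: "vsurf C ax u v h"
    and c0: "\<not> cube_at C ax (if d then u else u-1) v h"
    and w0: "hsurf C k (beam_cell ax u v d 0)"
    and conv: "\<And>p q r. cube_at C ax p v h \<Longrightarrow> cube_at C ax q v h \<Longrightarrow> p<r \<Longrightarrow> r<q \<Longrightarrow> cube_at C ax r v h"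
  shows "\<exists>b. other_anchor C ax u v h d k b \<and> snd b = h'"
proof -
  define col where "col j = (if d then u + int j else u - 1 - int j)" for j :: nat
  define W where "W j = beam_cell ax u v d j" for j
  have Wc: "W j = hpos ax (col j) v" for j unfolding W_def col_def beam_cell_def by simp
  have hs: "hsurf C k (hpos ax c v) \<longleftrightarrow> (cube_at C ax c v h \<noteq> cube_at C ax c v h')" for c
    using hh unfolding hsurf_def cube_at_def by (cases "hpos ax c v") auto
  define F where "F = hface_at C k (W 0)"
  have injW: "inj W"
  proof
    fix a b assume "W a = W b"
    then have "col a = col b" unfolding Wc by (rule hpos_inj)
    then show "a = b" unfolding col_def by (auto split: if_splits)
  qed
  have "F \<subseteq> (\<lambda>(x,y,z). (x,y)) ` C"
  proof
    fix q assume "q \<in> F"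
    then have "hsurf C k q" unfolding F_def hface_at_def using hadj_path_hsurf by blast
    then obtain x y where "q = (x,y)" "(x,y,k-1) \<in> C \<or> (x,y,k) \<in> C"
      unfolding hsurf_def by (cases q) auto
    then show "q \<in> (\<lambda>(x,y,z). (x,y)) ` C" by (auto intro: rev_image_eqI)
  qed
  then have finF: "finite F" using fin finite_subset by blast
  have "finite (W -` F)" using finite_vimageI[OF finF injW] .
  then have "\<exists>j. W j \<notin> F" using infinite_UNIV_nat by (metis UNIV_I finite_subset subsetI vimageI)
  define n where "n = (LEAST j. W j \<notin> F)"
  have Wn: "W n \<notin> F" unfolding n_def using \<open>\<exists>j. W j \<notin> F\<close> by (rule LeastI_ex)
  have below: "W j \<in> F" if "j < n" for j using not_less_Least[of j "\<lambda>j. W j \<notin> F"] that n_def by blast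
  have W0F: "W 0 \<in> F" unfolding F_def hface_at_def using w0 W_def by simp
  then have npos: "0 < n" using Wn by (cases n) auto
  have ib: "ibeam C ax u v h d k = {W j | j. \<forall>j'\<le>j. W j' \<in> F}"
    using va hh unfolding ibeam_def F_def W_def by auto
  have inB: "\<forall>j<n. beam_cell ax u v d j \<in> ibeam C ax u v h d k"
    unfolding ib W_def[symmetric] using below by force
  have notB: "beam_cell ax u v d n \<notin> ibeam C ax u v h d k"
  proof
    assume "beam_cell ax u v d n \<in> ibeam C ax u v h d k"
    then obtain j where "W n = W j" "\<forall>j'\<le>j. W j' \<in> F" unfolding ib W_def by auto
    then show False using injW Wn by (metis injD order_refl)
  qed
  have F1: "W (n-1) \<in> F" using below npos by simp
  have nhs: "\<not> hsurf C k (W n)"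
  proof
    assume a: "hsurf C k (W n)"
    have "hsurf C k (W (n-1))" using F1 unfolding F_def hface_at_def using hadj_path_hsurf by blast
    moreover have "\<bar>fst (W (n-1)) - fst (W n)\<bar> + \<bar>snd (W (n-1)) - snd (W n)\<bar> = 1"
      unfolding Wc col_def hpos_def using npos by auto
    ultimately have "hadj C k (W (n-1)) (W n)" using a unfolding hadj_def by simp
    then have "W n \<in> F" using F1 unfolding F_def hface_at_def
      by (auto intro: rtranclp.rtrancl_into_rtrancl)
    then show False using Wn by simp
  qed
  have ca: "cube_at C ax (if d then u-1 else u) v h" using va c0 unfolding vsurf_def by auto
  have nch: "\<not> cube_at C ax (col j) v h" for j
  proof (cases "j = 0")
    case True then show ?thesis using c0 unfolding col_def by (cases d) simp_all
  next
    case False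
    show ?thesis
    proof
      assume cj: "cube_at C ax (col j) v h"
      show False
      proof (cases d)
        case True
        then show False using conv[of "u-1" "u+int j" u] ca cj c0 False unfolding col_def by simp
      next
        case dF: False
        then show False using conv[of "u-1-int j" u "u-1"] ca cj c0 False unfolding col_def by simp
      qed
    qed
  qed
  have a1: "\<not> cube_at C ax (col n) v h'" using nhs nch[of n] hs unfolding Wc by blast
  have a2: "cube_at C ax (col (n-1)) v h'" using F1 nch[of "n-1"] hs hadj_path_hsurf
    unfolding F_def hface_at_def Wc by blast
  define b where "b = (if d then u + int n else u - int n, h')"
  have vb: "vsurf C ax (fst b) v (snd b)"
  proof (cases d)
    case True
    then have "col (n-1) = fst b - 1" "col n = fst b" unfolding col_def b_def using npos by auto
    then show ?thesis using a1 a2 unfolding vsurf_def b_def by auto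
  next
    case False
    then have "col (n-1) = fst b" "col n = fst b - 1" unfolding col_def b_def using npos by auto
    then show ?thesis using a1 a2 unfolding vsurf_def b_def by auto
  qed
  have "other_anchor C ax u v h d k b"
    unfolding other_anchor_def
    using npos inB notB vb hh by (auto simp: b_def)
  then show ?thesis unfolding b_def by auto
qed

lemma bc0: "beam_cell ax u v d 0 = hpos ax (if d then u else u-1) v"
  unfolding beam_cell_def by simp

theorem lemma3:
  fixes C :: "cube set" and i :: nat
  assumes "polycube C" and "orth_convex_layers C" and "1 \<le> i" and "i \<le> mtop C"
  shows "(\<forall>ax u v z d. ibeam C ax u v z d (zpl C i) \<noteq> {}
            \<and> top_cell C (zpl C i) (beam_cell ax u v d 0)
          \<longrightarrow> (\<exists>b\<in>anchors C ax u v z d (zpl C i). on_band C i (snd b)))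
       \<and> (\<forall>ax u v z d. ibeam C ax u v z d (zpl C (i - 1)) \<noteq> {}
            \<and> bottom_cell C (zpl C (i - 1)) (beam_cell ax u v d 0)
          \<longrightarrow> (\<exists>b\<in>anchors C ax u v z d (zpl C (i - 1)). on_band C i (snd b)))"
proof -
  have fin: "finite C" using assms(1) unfolding polycube_def by blast
  define k where "k = zpl C i"
  define k0 where "k0 = zpl C (i-1)"
  have lt: "k0 < k" unfolding k_def k0_def using zpl_less[OF fin, of "i-1" i] assms(3,4) by simp
  have P1: "\<exists>b\<in>anchors C ax u v z d k. on_band C i (snd b)"
    if ne: "ibeam C ax u v z d k \<noteq> {}" and tc: "top_cell C k (beam_cell ax u v d 0)" for ax u v z d
  proof -
    have va: "vsurf C ax u v z" and zz: "z = k-1 \<or> z = k" using ne unfolding ibeam_def by (auto split: if_splits)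
    show ?thesis
    proof (cases "z = k-1")
      case True
      then have "on_band C i (snd (u,z))" using lt unfolding on_band_def k_def k0_def by simp
      then show ?thesis unfolding anchors_def by blast
    next
      case False
      then have zk: "z = k" using zz by simp
      obtain x y where xy: "hpos ax (if d then u else u-1) v = (x,y)" by (cases "hpos ax (if d then u else u-1) v") auto
      have xy2: "(x,y,k-1) \<in> C" "(x,y,k) \<notin> C" using tc unfolding bc0 xy top_cell_def by simp_all
      have c0: "\<not> cube_at C ax (if d then u else u-1) v z" using xy xy2 zk unfolding cube_at_def by simp
      have w0: "hsurf C k (beam_cell ax u v d 0)" using xy xy2 unfolding hsurf_def bc0 by auto
      have conv: "cube_at C ax r v z"
        if "cube_at C ax p v z" "cube_at C ax q v z" "p<r" "r<q" for p q r
      proof -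
        obtain x y where "hpos ax p v = (x,y)" by (cases "hpos ax p v") auto
        then have "(x,y,zpl C i) \<in> C" using that(1) zk unfolding cube_at_def k_def by simp
        then have im: "i < mtop C" using cube_top[OF fin _ order_refl assms(4)] by blast
        have h1: "zpl C (Suc i - 1) \<le> z" using zk unfolding k_def by simp
        have h2: "z < zpl C (Suc i)" using zk zpl_less[OF fin, of i "Suc i"] im unfolding k_def by simp
        have l1: "1 \<le> Suc i" "Suc i \<le> mtop C" using im by simp_all
        show ?thesis by (rule conv_line[OF assms(2) l1 h1 h2 that])
      qed
      have hh: "(z = k \<and> k-1 = k-1) \<or> (z = k-1 \<and> k-1 = k)" using zk by simp
      have "\<exists>b. other_anchor C ax u v z d k b \<and> snd b = k-1"
        by (rule beam_core[OF fin hh va c0 w0]) (rule conv)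
      then obtain b where ob: "other_anchor C ax u v z d k b" and sb: "snd b = k-1" by blast
      have ob2: "on_band C i (k-1)" using lt unfolding on_band_def k_def k0_def by simp
      have "b \<in> anchors C ax u v z d k" unfolding anchors_def using ob by simp
      then show ?thesis using ob2 sb by (intro bexI[of _ b]) simp_all
    qed
  qed
  have P2: "\<exists>b\<in>anchors C ax u v z d k0. on_band C i (snd b)"
    if ne: "ibeam C ax u v z d k0 \<noteq> {}" and tc: "bottom_cell C k0 (beam_cell ax u v d 0)" for ax u v z d
  proof -
    have va: "vsurf C ax u v z" and zz: "z = k0-1 \<or> z = k0" using ne unfolding ibeam_def by (auto split: if_splits)
    show ?thesis
    proof (cases "z = k0")
      case True
      then have "on_band C i (snd (u,z))" using lt unfolding on_band_def k_def k0_def by simp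
      then show ?thesis unfolding anchors_def by blast
    next
      case False
      then have zk: "z = k0-1" using zz by simp
      obtain x y where xy: "hpos ax (if d then u else u-1) v = (x,y)" by (cases "hpos ax (if d then u else u-1) v") auto
      have xy2: "(x,y,k0) \<in> C" "(x,y,k0-1) \<notin> C" using tc unfolding bc0 xy bottom_cell_def by simp_all
      have c0: "\<not> cube_at C ax (if d then u else u-1) v z" using xy xy2 zk unfolding cube_at_def by simp
      have w0: "hsurf C k0 (beam_cell ax u v d 0)" using xy xy2 unfolding hsurf_def bc0 by auto
      have conv: "cube_at C ax r v z"
        if "cube_at C ax p v z" "cube_at C ax q v z" "p<r" "r<q" for p q r
      proof -
        obtain x y where "hpos ax p v = (x,y)" by (cases "hpos ax p v") auto
        then have xc: "(x,y,k0-1) \<in> C" using that(1) zk unfolding cube_at_def by simp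
        have lt2: "k0 - 1 < zpl C (i-1)" unfolding k0_def by simp
        have i4: "i - 1 \<le> mtop C" using assms(4) by simp
        have im: "0 < i - 1" by (rule cube_bot[OF fin xc lt2 i4])
        have h1: "zpl C (i - 1 - 1) \<le> z" using zk zpl_less[OF fin, of "i-1-1" "i-1"] im i4 unfolding k0_def by simp
        have h2: "z < zpl C (i-1)" using zk unfolding k0_def by simp
        have l1: "1 \<le> i - 1" "i - 1 \<le> mtop C" using im i4 by simp_all
        show ?thesis by (rule conv_line[OF assms(2) l1 h1 h2 that])
      qed
      have hh: "(z = k0 \<and> k0 = k0-1) \<or> (z = k0-1 \<and> k0 = k0)" using zk by simp
      have "\<exists>b. other_anchor C ax u v z d k0 b \<and> snd b = k0"
        by (rule beam_core[OF fin hh va c0 w0]) (rule conv)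
      then obtain b where ob: "other_anchor C ax u v z d k0 b" and sb: "snd b = k0" by blast
      have ob2: "on_band C i (k0)" using lt unfolding on_band_def k_def k0_def by simp
      have "b \<in> anchors C ax u v z d k0" unfolding anchors_def using ob by simp
      then show ?thesis using ob2 sb by (intro bexI[of _ b]) simp_all
    qed
  qed
  show ?thesis using P1 P2 unfolding k_def k0_def by blast
qed

end
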